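(* For every $n\ge1$, the number of matrices $A\in\mathbb{R}^{n\times n}$ with all rows of Euclidean norm $1$ that maximize $\beta(A)$ over all such matrices is at most $2^{n\cdot 2^n}$.
   Context: For $A\in\mathbb{R}^{m\times n}$, $\beta(A)=\frac{1}{2^n}\sum_{x\in\{-1,1\}^n}\|Ax\|_\infty$. *)

theory Defs
  imports "HOL-Analysis.Analysis"
begin

definition sign_vectors :: "(real^'n) set" where
  "sign_vectors = {x. \<forall>i. x $ i \<in> {-1, 1}}"

definition inf_norm :: "real^'m \<Rightarrow> real" where
  "inf_norm y = Max (range (\<lambda>i. \<bar>y $ i\<bar>))"

definition beta :: "real^'n^'m \<Rightarrow> real" where
  "beta A = (1 / 2 ^ CARD('n)) * (\<Sum>x\<in>sign_vectors. inf_norm (A *v x))"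

definition unit_rows :: "real^'n^'m \<Rightarrow> bool" where
  "unit_rows A \<longleftrightarrow> (\<forall>i. norm (A $ i) = 1)"

end

theory Submission imports Defs begin

lemma sv_finite_card:
  "finite (sign_vectors :: (real^'n::finite) set) \<and> card (sign_vectors :: (real^'n) set) = 2 ^ CARD('n)"
proof -
  let ?g = "\<lambda>T::'n set. (\<chi> i. if i \<in> T then 1 else -1) :: real^'n"
  have eq: "sign_vectors = ?g ` UNIV"
  proof
    show "sign_vectors \<subseteq> ?g ` UNIV"
    proof
      fix x :: "real^'n" assume "x \<in> sign_vectors"
      hence "\<forall>i. x$i = -1 \<or> x$i = 1" by (auto simp: sign_vectors_def)
      hence "x = ?g {i. x$i = 1}" by (auto simp: vec_eq_iff)
      thus "x \<in> ?g ` UNIV" by blast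
    qed
    show "?g ` UNIV \<subseteq> sign_vectors" by (auto simp: sign_vectors_def)
  qed
  have inj: "inj ?g"
  proof (rule injI)
    fix S T :: "'n set" assume "?g S = ?g T"
    show "S = T"
    proof (intro set_eqI)
      fix i
      have "?g S $ i = ?g T $ i" using \<open>?g S = ?g T\<close> by simp
      hence "(if i \<in> S then 1 else -1::real) = (if i \<in> T then 1 else -1)" by simp
      thus "i \<in> S \<longleftrightarrow> i \<in> T" by (cases "i \<in> S"; cases "i \<in> T") auto
    qed
  qed
  have "card (?g ` UNIV) = card (UNIV :: 'n set set)" by (rule card_image[OF inj])
  also have "\<dots> = 2 ^ CARD('n)" using card_Pow[of "UNIV :: 'n set"] by simp
  finally have "card (?g ` UNIV) = 2 ^ CARD('n)" .
  moreover have "finite (?g ` UNIV)" by simp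
  ultimately show ?thesis using eq by simp
qed

lemma sv_inner: "x \<in> sign_vectors \<Longrightarrow> x \<bullet> x = real CARD('n::finite)"
  for x :: "real^'n"
proof -
  assume "x \<in> sign_vectors"
  hence h: "\<And>i. x$i = -1 \<or> x$i = 1" by (auto simp: sign_vectors_def)
  have "\<And>i. x$i * x$i = 1"
  proof -
    fix i show "x$i * x$i = 1" using h[of i] by auto
  qed
  thus ?thesis by (simp add: inner_vec_def)
qed

lemma sv_norm: "x \<in> sign_vectors \<Longrightarrow> norm x = sqrt (real CARD('n::finite))"
  for x :: "real^'n"
  by (simp add: norm_eq_sqrt_inner sv_inner)

lemma inf_norm_ge: "\<bar>y $ j\<bar> \<le> inf_norm y"
  unfolding inf_norm_def by (rule Max_ge) auto

lemma inf_norm_ex: "\<exists>i. inf_norm y = \<bar>y $ i\<bar>"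
proof -
  have "inf_norm y \<in> range (\<lambda>i. \<bar>y $ i\<bar>)" unfolding inf_norm_def by (rule Max_in) auto
  thus ?thesis by auto
qed

lemma two_mul_le: "n \<ge> 1 \<Longrightarrow> 2 * n \<le> (2::nat) ^ n"
proof (induction n rule: dec_induct)
  case base then show ?case by simp
next
  case (step n) then show ?case by simp
qed


lemma two_mul_card: "2 * CARD('n::finite) \<le> 2 ^ CARD('n)"
  by (rule two_mul_le) (simp add: Suc_le_eq)

definition idxA :: "real^'n^'m \<Rightarrow> real^'n \<Rightarrow> 'm" where
  "idxA A x = (SOME i. \<forall>j. \<bar>A$j \<bullet> x\<bar> \<le> \<bar>A$i \<bullet> x\<bar>)"
definition sgA :: "real^'n^'m \<Rightarrow> real^'n \<Rightarrow> real" where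
  "sgA A x = (if 0 \<le> A$(idxA A x) \<bullet> x then 1 else -1)"
definition codeA :: "real^'n^'n \<Rightarrow> real^'n \<Rightarrow> 'n \<times> real" where
  "codeA A = restrict (\<lambda>x. (idxA A x, sgA A x)) sign_vectors"
definition vv :: "(real^'n \<Rightarrow> 'n \<times> real) \<Rightarrow> 'n \<Rightarrow> real^'n" where
  "vv f i = (\<Sum>x\<in>{x\<in>sign_vectors. fst (f x) = i}. snd (f x) *\<^sub>R x)"
definition decode :: "(real^'n \<Rightarrow> 'n \<times> real) \<Rightarrow> real^'n^'n" where
  "decode f = (\<chi> i. (1 / norm (vv f i)) *\<^sub>R vv f i)"

lemma row_mult: "(A *v x) $ i = A $ i \<bullet> x" by (simp add: matrix_mult_dot)

lemma idxA_max: "\<bar>A$j \<bullet> x\<bar> \<le> \<bar>A$(idxA A x) \<bullet> x\<bar>"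
proof -
  obtain i where i: "inf_norm (A *v x) = \<bar>(A *v x) $ i\<bar>" using inf_norm_ex by blast
  have "\<forall>j. \<bar>A$j \<bullet> x\<bar> \<le> \<bar>A$i \<bullet> x\<bar>"
  proof
    fix j show "\<bar>A$j \<bullet> x\<bar> \<le> \<bar>A$i \<bullet> x\<bar>"
      using inf_norm_ge[of "A *v x" j] i by (simp add: row_mult)
  qed
  hence "\<exists>i. \<forall>j. \<bar>A$j \<bullet> x\<bar> \<le> \<bar>A$i \<bullet> x\<bar>" by blast
  from someI_ex[OF this] show ?thesis unfolding idxA_def by blast
qed

lemma F_ge: "\<bar>B$j \<bullet> x\<bar> \<le> inf_norm (B *v x)"
  using inf_norm_ge[of "B *v x" j] by (simp add: row_mult)

lemma F_idx: "inf_norm (A *v x) = \<bar>A$(idxA A x) \<bullet> x\<bar>"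
proof -
  obtain i where i: "inf_norm (A *v x) = \<bar>(A *v x) $ i\<bar>" using inf_norm_ex by blast
  show ?thesis using i idxA_max[of A i x] F_ge[of A "idxA A x" x] by (simp add: row_mult)
qed

lemma F_sg: "inf_norm (A *v x) = sgA A x * (A$(idxA A x) \<bullet> x)"
  by (simp add: F_idx sgA_def)

lemma regroup:
  fixes B :: "real^'n^'n::finite"
  shows "(\<Sum>x\<in>sign_vectors. snd (f x) * (B$(fst (f x)) \<bullet> x)) = (\<Sum>i\<in>UNIV. B$i \<bullet> vv f i)"
proof -
  have "(\<Sum>i\<in>UNIV. B$i \<bullet> vv f i) = (\<Sum>i\<in>UNIV. \<Sum>x\<in>{x\<in>sign_vectors. fst (f x) = i}. snd (f x) * (B$(fst (f x)) \<bullet> x))"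
    unfolding vv_def by (intro sum.cong refl) (auto simp: inner_sum_right intro!: sum.cong)
  also have "\<dots> = (\<Sum>x\<in>sign_vectors. snd (f x) * (B$(fst (f x)) \<bullet> x))"
    by (rule sum.group) (auto simp: sv_finite_card)
  finally show ?thesis by simp
qed

lemma sum_eq_pointwise:
  fixes g h :: "'a \<Rightarrow> real"
  assumes "finite S" "\<forall>x\<in>S. g x \<le> h x" "sum h S \<le> sum g S" "y \<in> S"
  shows "g y = h y"
proof -
  have "sum (\<lambda>x. h x - g x) S = 0"
  proof (rule antisym)
    show "sum (\<lambda>x. h x - g x) S \<le> 0" using assms(3) by (simp add: sum_subtractf)
    show "0 \<le> sum (\<lambda>x. h x - g x) S" using assms(2) by (intro sum_nonneg) auto
  qed
  hence "\<forall>x\<in>S. h x - g x = 0" using assms(1,2) by (subst (asm) sum_nonneg_eq_0_iff) auto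
  thus ?thesis using assms(4) by auto
qed

lemma exists_good:
  fixes A :: "real^'n^'n::finite"
  assumes uA: "unit_rows A"
  shows "\<exists>x0\<in>sign_vectors. \<forall>j. j \<noteq> i \<longrightarrow> \<bar>A$j \<bullet> x0\<bar> < sqrt (real CARD('n))"
proof (rule ccontr)
  let ?n = "real CARD('n)"
  let ?bad = "(\<lambda>(j,\<sigma>). \<sigma> *\<^sub>R (sqrt ?n *\<^sub>R A$j)) ` ((UNIV - {i}) \<times> {-1,1::real})"
  assume nt: "\<not> ?thesis"
  have "sign_vectors \<subseteq> ?bad"
  proof
    fix x :: "real^'n" assume xS: "x \<in> sign_vectors"
    then obtain j where j: "j \<noteq> i" "\<not> \<bar>A$j \<bullet> x\<bar> < sqrt ?n" using nt by blast
    have nx: "norm x = sqrt ?n" by (rule sv_norm[OF xS])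
    have nj: "norm (A$j) = 1" using uA by (simp add: unit_rows_def)
    have "\<bar>A$j \<bullet> x\<bar> \<le> norm (A$j) * norm x" by (rule Cauchy_Schwarz_ineq2)
    hence "\<bar>A$j \<bullet> x\<bar> = norm (A$j) * norm x" using j nx nj by simp
    hence "norm (A$j) *\<^sub>R x = norm x *\<^sub>R A$j \<or> norm (A$j) *\<^sub>R x = - norm x *\<^sub>R A$j"
      by (simp add: norm_cauchy_schwarz_abs_eq)
    hence "x = 1 *\<^sub>R (sqrt ?n *\<^sub>R A$j) \<or> x = (-1) *\<^sub>R (sqrt ?n *\<^sub>R A$j)" using nj nx by simp
    thus "x \<in> ?bad" using j by force
  qed
  hence "card (sign_vectors :: (real^'n) set) \<le> card ?bad" by (intro card_mono) auto
  also have "card ?bad \<le> card ((UNIV - {i}) \<times> {-1,1::real})" by (rule card_image_le) simp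
  also have "\<dots> = (CARD('n) - 1) * 2" by (simp add: card_cartesian_product)
  finally have "2^CARD('n) \<le> (CARD('n) - 1)*2" using sv_finite_card[where 'n='n] by simp
  moreover have "2 * CARD('n) \<le> 2^CARD('n)" by (rule two_mul_card)
  moreover have "CARD('n) \<ge> 1" by (simp add: Suc_le_eq)
  ultimately show False by linarith
qed


lemma maxim_decode:
  fixes A :: "real^'n^'n::finite"
  assumes uA: "unit_rows A" and mx: "\<forall>B::real^'n^'n. unit_rows B \<longrightarrow> beta B \<le> beta A"
  shows "decode (codeA A) = A"
proof -
  let ?S = "sign_vectors :: (real^'n) set"
  let ?n = "real CARD('n)"
  let ?Phi = "\<lambda>B::real^'n^'n. (\<Sum>x\<in>?S. inf_norm (B *v x))"
  define f where "f = codeA A"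
  define v where "v = vv f"
  have fin: "finite ?S" by (simp add: sv_finite_card)
  have mxP: "?Phi B \<le> ?Phi A" if uB: "unit_rows B" for B :: "real^'n^'n"
  proof -
    have "beta B \<le> beta A" using mx uB by blast
    thus ?thesis unfolding beta_def by (simp add: divide_le_cancel)
  qed
  have fS: "f x = (idxA A x, sgA A x)" if "x \<in> ?S" for x
    using that by (simp add: f_def codeA_def)
  have PA: "?Phi A = (\<Sum>i\<in>UNIV. A$i \<bullet> v i)"
  proof -
    have "?Phi A = (\<Sum>x\<in>?S. snd (f x) * (A$(fst (f x)) \<bullet> x))"
      by (intro sum.cong refl) (simp add: fS F_sg)
    thus ?thesis by (simp add: regroup v_def)
  qed
  have pw: "\<forall>x\<in>?S. snd (f x) * (B$(fst (f x)) \<bullet> x) \<le> inf_norm (B *v x)" for B :: "real^'n^'n"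
  proof
    fix x assume xS: "x \<in> ?S"
    have "sgA A x * (B$(idxA A x) \<bullet> x) \<le> \<bar>B$(idxA A x) \<bullet> x\<bar>" by (auto simp: sgA_def)
    also have "\<dots> \<le> inf_norm (B *v x)" by (rule F_ge)
    finally show "snd (f x) * (B$(fst (f x)) \<bullet> x) \<le> inf_norm (B *v x)" using fS[OF xS] by simp
  qed
  have low: "(\<Sum>i\<in>UNIV. B$i \<bullet> v i) \<le> ?Phi B" for B :: "real^'n^'n"
  proof -
    have "(\<Sum>i\<in>UNIV. B$i \<bullet> v i) = (\<Sum>x\<in>?S. snd (f x) * (B$(fst (f x)) \<bullet> x))"
      by (simp add: regroup v_def)
    also have "\<dots> \<le> ?Phi B" using pw[of B] by (intro sum_mono) auto
    finally show ?thesis .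
  qed
  have nz: "v i \<noteq> 0" for i
  proof
    assume v0: "v i = 0"
    obtain x0 where x0S: "x0 \<in> ?S" and x0: "\<And>j. j \<noteq> i \<Longrightarrow> \<bar>A$j \<bullet> x0\<bar> < sqrt ?n"
      using exists_good[OF uA, of i] by blast
    have npos: "sqrt ?n > 0" by simp
    have nx: "norm x0 = sqrt ?n" by (rule sv_norm[OF x0S])
    have xx: "x0 \<bullet> x0 = ?n" by (rule sv_inner[OF x0S])
    define c where "c = (1/sqrt ?n) *\<^sub>R x0"
    have cx: "c \<bullet> x0 = sqrt ?n" using npos
      by (simp add: c_def xx) (metis real_div_sqrt of_nat_0_le_iff)
    have nc: "norm c = 1" using npos by (simp add: c_def nx)
    have key: "sqrt ?n \<le> sgA A x0 * ((if idxA A x0 = i then d else A$(idxA A x0)) \<bullet> x0)"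
      if nd: "norm d = 1" and dx: "sqrt ?n \<le> \<bar>d \<bullet> x0\<bar>" for d
    proof -
      define B where "B = (\<chi> j. if j = i then d else A$j)"
      have uB: "unit_rows B" using uA nd by (auto simp: unit_rows_def B_def)
      have "(\<Sum>j\<in>UNIV. B$j \<bullet> v j) = (\<Sum>j\<in>UNIV. A$j \<bullet> v j)"
        by (intro sum.cong) (auto simp: B_def v0)
      hence "?Phi B \<le> (\<Sum>j\<in>UNIV. B$j \<bullet> v j)" using mxP[OF uB] PA by simp
      moreover have "(\<Sum>j\<in>UNIV. B$j \<bullet> v j) = (\<Sum>x\<in>?S. snd (f x) * (B$(fst (f x)) \<bullet> x))"
        by (simp add: v_def regroup)
      ultimately have le: "?Phi B \<le> (\<Sum>x\<in>?S. snd (f x) * (B$(fst (f x)) \<bullet> x))" by simp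
      have e: "snd (f x0) * (B$(fst (f x0)) \<bullet> x0) = inf_norm (B *v x0)"
        by (rule sum_eq_pointwise[OF fin pw le x0S])
      have "sqrt ?n \<le> inf_norm (B *v x0)" using dx F_ge[of B i x0] by (simp add: B_def)
      thus ?thesis using e fS[OF x0S] by (simp add: B_def)
    qed
    show False
    proof (cases "idxA A x0 = i")
      case True
      have "sqrt ?n \<le> sgA A x0 * (c \<bullet> x0)" using key[OF nc] cx True by simp
      moreover have "sqrt ?n \<le> sgA A x0 * ((-c) \<bullet> x0)" using key[of "-c"] nc cx True by simp
      ultimately show False using npos by simp
    next
      case False
      have "sqrt ?n \<le> sgA A x0 * (A$(idxA A x0) \<bullet> x0)" using key[OF nc] cx False by simp
      also have "\<dots> \<le> \<bar>A$(idxA A x0) \<bullet> x0\<bar>" by (auto simp: sgA_def)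
      also have "\<dots> < sqrt ?n" using x0 False by blast
      finally show False by simp
    qed
  qed
  define B where "B = decode f"
  have Bi: "B$i = (1/norm (v i)) *\<^sub>R v i" for i by (simp add: B_def decode_def v_def)
  have uB: "unit_rows B" using nz by (simp add: unit_rows_def Bi)
  have Bv: "B$i \<bullet> v i = norm (v i)" for i
    using nz[of i] by (simp add: Bi dot_square_norm power2_eq_square)
  have calc: "(\<Sum>i\<in>UNIV. norm (v i)) \<le> (\<Sum>i\<in>UNIV. A$i \<bullet> v i)"
    using low[of B] mxP[OF uB] PA by (simp add: Bv)
  have pwA: "\<forall>i\<in>UNIV. A$i \<bullet> v i \<le> norm (v i)"
  proof
    fix i :: 'n
    have "A$i \<bullet> v i \<le> norm (A$i) * norm (v i)" by (rule norm_cauchy_schwarz)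
    thus "A$i \<bullet> v i \<le> norm (v i)" using uA by (simp add: unit_rows_def)
  qed
  have eqi: "A$i \<bullet> v i = norm (v i)" for i
    by (rule sum_eq_pointwise[OF finite pwA calc UNIV_I])
  have "A$i = B$i" for i
  proof -
    have nA: "norm (A$i) = 1" using uA by (simp add: unit_rows_def)
    have "A$i \<bullet> v i = norm (A$i) * norm (v i)" using eqi nA by simp
    hence "norm (A$i) *\<^sub>R v i = norm (v i) *\<^sub>R A$i" by (simp only: norm_cauchy_schwarz_eq)
    hence h: "v i = norm (v i) *\<^sub>R A$i" using nA by simp
    have "(1/norm (v i)) *\<^sub>R v i = (1/norm (v i) * norm (v i)) *\<^sub>R A$i"
      by (metis h scaleR_scaleR)
    also have "\<dots> = A$i" using nz[of i] by simp
    finally show ?thesis by (simp add: Bi)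
  qed
  thus ?thesis by (simp add: B_def f_def vec_eq_iff)
qed

theorem corollary3:
  fixes n_type :: "'n::finite itself"
  defines "M \<equiv> {A :: real^'n^'n. unit_rows A \<and>
                   (\<forall>B :: real^'n^'n. unit_rows B \<longrightarrow> beta B \<le> beta A)}"
  shows "finite M \<and> card M \<le> 2 ^ (CARD('n) * 2 ^ CARD('n))"
proof -
  let ?S = "sign_vectors :: (real^'n) set"
  let ?P = "PiE ?S (\<lambda>_. (UNIV :: 'n set) \<times> {-1,1::real})"
  have fin: "finite ?S" and cS: "card ?S = 2 ^ CARD('n)" using sv_finite_card[where 'n='n] by auto
  have sub: "M \<subseteq> decode ` ?P"
  proof
    fix A assume "A \<in> M"
    hence uA: "unit_rows A" and mx: "\<forall>B::real^'n^'n. unit_rows B \<longrightarrow> beta B \<le> beta A"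
      by (auto simp: M_def)
    have "codeA A \<in> ?P" unfolding codeA_def by (subst restrict_PiE_iff) (auto simp: sgA_def)
    moreover have "A = decode (codeA A)" using maxim_decode[OF uA mx] by simp
    ultimately show "A \<in> decode ` ?P" by blast
  qed
  have finP: "finite ?P" using fin by (intro finite_PiE) auto
  have c2: "card ((UNIV :: 'n set) \<times> {-1,1::real}) = 2 * CARD('n)"
    by (simp add: card_cartesian_product)
  have "card ?P = (\<Prod>x\<in>?S. card ((UNIV :: 'n set) \<times> {-1,1::real}))"
    using fin by (rule card_PiE)
  also have "\<dots> = card ((UNIV :: 'n set) \<times> {-1,1::real}) ^ card ?S" by (rule prod_constant)
  finally have cP: "card ?P = (2 * CARD('n)) ^ (2 ^ CARD('n))" by (simp only: c2 cS)
  have "card M \<le> card (decode ` ?P)" using sub finP by (intro card_mono) auto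
  also have "\<dots> \<le> card ?P" using finP by (rule card_image_le)
  also have "\<dots> = (2 * CARD('n)) ^ (2 ^ CARD('n))" by (rule cP)
  also have "\<dots> \<le> (2 ^ CARD('n)) ^ (2 ^ CARD('n))" by (intro power_mono two_mul_card) auto
  also have "\<dots> = 2 ^ (CARD('n) * 2 ^ CARD('n))" by (simp add: power_mult)
  finally have "card M \<le> 2 ^ (CARD('n) * 2 ^ CARD('n))" .
  moreover have "finite M" using sub finP by (meson finite_imageI finite_subset)
  ultimately show ?thesis by simp
qed

end
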